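(* Let $n\ge1$, let $f(x)=\sum_{i=0}^{n-1}a_ix^i$ and $g(x)=\sum_{i=0}^{n-1}b_ix^i$ be polynomials over $\mathbb{R}$, and let $\mathfrak{h}=f(\mathfrak{r})+\mathfrak{s}g(\mathfrak{r})\in\mathbb{R}[D_{2n}]$. Then the eigenvalues of the matrix $A(\mathfrak{h})A(\mathfrak{h})^T$ are $(|f(\xi^i)|\pm|g(\xi^i)|)^2$ for $i=0,1,\dots,n-1$, where $\xi=e^{2\pi\sqrt{-1}/n}$ and $|\cdot|$ is the complex absolute value. Consequently $|\mathfrak{h}|_{\rm Mat}\le\max\{|f(\xi^i)|+|g(\xi^i)| : i=0,1,\dots,n-1\}$.
   Context: $D_{2n}$ is the dihedral group of order $2n$ generated by $\mathfrak{r},\mathfrak{s}$ with $\mathfrak{r}^n=\mathfrak{s}^2=1$, $\mathfrak{s}\mathfrak{r}\mathfrak{s}=\mathfrak{r}^{-1}$. The group ring $\mathbb{R}[D_{2n}]$ is identified with $\mathbb{R}^{2n}$ via the basis of group elements (coefficient embedding). For $\mathfrak{h}\in\mathbb{R}[D_{2n}]$, $A(\mathfrak{h})$ is the $2n\times2n$ real matrix of the linear map $x\mapsto\mathfrak{h}x$ on $\mathbb{R}[D_{2n}]$ (the regular representation applied to $\mathfrak{h}$). The matrix norm is $|\mathfrak{h}|_{\rm Mat}=\sqrt{\text{largest eigenvalue of }A(\mathfrak{h})A(\mathfrak{h})^T}$. *)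

theory Defs
  imports "Jordan_Normal_Form.Char_Poly"
begin

text \<open>Elements of the dihedral group D_{2n} are encoded as pairs (e,k) with e < 2, k < n,
  standing for s^e r^k.  Product: (s^e r^k)(s^e' r^k') = s^(e+e') r^(k+k') if e' = 0
  and = s^(e+1) r^(k'-k) if e' = 1 (using r^k s = s r^(-k)).\<close>

definition dih_carrier :: "nat \<Rightarrow> (nat \<times> nat) set" where
  "dih_carrier n = {0..<2} \<times> {0..<n}"

definition dih_mult :: "nat \<Rightarrow> nat \<times> nat \<Rightarrow> nat \<times> nat \<Rightarrow> nat \<times> nat" where
  "dih_mult n x y = (case x of (e, k) \<Rightarrow> case y of (e', k') \<Rightarrow>
     ((e + e') mod 2, (if e' = 0 then k + k' else k' + n - k) mod n))"

definition dih_elem :: "nat \<Rightarrow> nat \<Rightarrow> nat \<times> nat" where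
  "dih_elem n i = (i div n, i mod n)"

definition gr_mult :: "nat \<Rightarrow> (nat \<times> nat \<Rightarrow> real) \<Rightarrow> (nat \<times> nat \<Rightarrow> real) \<Rightarrow> (nat \<times> nat \<Rightarrow> real)" where
  "gr_mult n u v = (\<lambda>z. \<Sum>x\<in>dih_carrier n. \<Sum>y\<in>dih_carrier n.
       (if dih_mult n x y = z then u x * v y else 0))"

definition gr_basis :: "nat \<times> nat \<Rightarrow> (nat \<times> nat \<Rightarrow> real)" where
  "gr_basis g = (\<lambda>z. if z = g then 1 else 0)"

definition regmat :: "nat \<Rightarrow> (nat \<times> nat \<Rightarrow> real) \<Rightarrow> real mat" where
  "regmat n h = mat (2*n) (2*n)
     (\<lambda>(i, j). gr_mult n h (gr_basis (dih_elem n j)) (dih_elem n i))"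

text \<open>The element f(r) + s g(r), f = sum a_i x^i, g = sum b_i x^i (deg < n).\<close>

definition dih_elt :: "nat \<Rightarrow> (nat \<Rightarrow> real) \<Rightarrow> (nat \<Rightarrow> real) \<Rightarrow> (nat \<times> nat \<Rightarrow> real)" where
  "dih_elt n a b = (\<lambda>(e, k). if k < n then (if e = 0 then a k else if e = 1 then b k else 0) else 0)"

definition mat_norm :: "nat \<Rightarrow> (nat \<times> nat \<Rightarrow> real) \<Rightarrow> real" where
  "mat_norm n h = sqrt (Max {t. eigenvalue (regmat n h * transpose_mat (regmat n h)) t})"

definition poly_at :: "nat \<Rightarrow> (nat \<Rightarrow> real) \<Rightarrow> complex \<Rightarrow> complex" where
  "poly_at n a z = (\<Sum>k<n. complex_of_real (a k) * z ^ k)"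

end

theory Submission
  imports Defs
begin


lemma mod_eq_iff1:
  assumes "k < n" "k' < n" "m < (n::nat)"
  shows "((k + k') mod n = m) = (k = (m + n - k') mod n)"
proof (cases "k + k' < n")
  case True
  then show ?thesis using assms
    by (cases "m < k'") (auto simp: le_mod_geq)
next
  case False
  then have "(k + k') mod n = k + k' - n" using assms by (simp add: le_mod_geq)
  then show ?thesis using assms False
    by (cases "m < k'") (auto simp: le_mod_geq)
qed

lemma mod_eq_iff2:
  assumes "k < n" "k' < n" "m < (n::nat)"
  shows "((k' + n - k) mod n = m) = (k = (k' + n - m) mod n)"
proof (cases "k \<le> k'")
  case True
  then show ?thesis using assms
    by (cases "m \<le> k'") (auto simp: le_mod_geq)
next
  case False
  then show ?thesis using assms
    by (cases "m \<le> k'") (auto simp: le_mod_geq)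
qed

lemma dih_mult_eq_iff:
  assumes "e < 2" "k < n" "e' < 2" "k' < n" "e2 < 2" "m < n"
  shows "(dih_mult n (e,k) (e',k') = (e2,m)) =
     ((e,k) = (if e' = 0 then (e2, (m+n-k') mod n) else (1-e2, (k'+n-m) mod n)))"
proof (cases "e' = 0")
  case True
  then show ?thesis using assms mod_eq_iff1[OF assms(2,4,6)]
    by (auto simp: dih_mult_def)
next
  case False
  then have e': "e' = 1" using assms by auto
  have "((e + 1) mod 2 = e2) = (e = 1 - e2)" using assms
    by (cases e; cases e2) auto
  then show ?thesis using assms e' mod_eq_iff2[OF assms(2,4,6)]
    by (auto simp: dih_mult_def)
qed

lemma sum_unique:
  assumes "finite S" "x0 \<in> S" "\<And>x. x \<in> S \<Longrightarrow> P x \<longleftrightarrow> x = x0"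
  shows "(\<Sum>x\<in>S. if P x then f x else 0) = f x0"
proof -
  have "(\<Sum>x\<in>S. if P x then f x else 0) = (\<Sum>x\<in>S. if x = x0 then f x else 0)"
    by (rule sum.cong) (auto simp: assms)
  also have "\<dots> = f x0" using assms by simp
  finally show ?thesis .
qed

lemma finite_dih_carrier: "finite (dih_carrier n)"
  unfolding dih_carrier_def by auto

lemma gr_mult_basis:
  assumes "y \<in> dih_carrier n"
  shows "gr_mult n u (gr_basis y) z = (\<Sum>x\<in>dih_carrier n. if dih_mult n x y = z then u x else 0)"
  unfolding gr_mult_def gr_basis_def
proof (rule sum.cong[OF refl])
  fix x
  have eq: "(\<lambda>y'. if dih_mult n x y' = z then u x * (if y' = y then 1 else 0) else 0)
     = (\<lambda>y'. if y' = y then (if dih_mult n x y = z then u x else 0) else 0)" by auto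
  show "(\<Sum>y'\<in>dih_carrier n. if dih_mult n x y' = z then u x * (if y' = y then 1 else 0) else 0)
     = (if dih_mult n x y = z then u x else 0)"
    unfolding eq using assms finite_dih_carrier by simp
qed

lemma regmat_entry:
  assumes "t < 2*n" "s < 2*n"
  shows "regmat n (dih_elt n a b) $$ (t,s) =
    (if s < n then (if t < n then a ((t mod n + n - s mod n) mod n) else b ((t mod n + n - s mod n) mod n))
     else (if t < n then b ((s mod n + n - t mod n) mod n) else a ((s mod n + n - t mod n) mod n)))"
proof -
  have n: "n > 0" using assms by auto
  have td: "t div n < 2" "s div n < 2" using assms by (auto simp: less_mult_imp_div_less)
  have tm: "t mod n < n" "s mod n < n" using n by auto
  have sC: "(s div n, s mod n) \<in> dih_carrier n" using td tm by (auto simp: dih_carrier_def)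
  define x0 where "x0 = (if s div n = 0 then (t div n, (t mod n + n - s mod n) mod n)
      else (1 - t div n, (s mod n + n - t mod n) mod n))"
  have x0C: "x0 \<in> dih_carrier n" using td n by (auto simp: x0_def dih_carrier_def)
  have "regmat n (dih_elt n a b) $$ (t,s) = (\<Sum>x\<in>dih_carrier n. if dih_mult n x (s div n, s mod n) = (t div n, t mod n) then dih_elt n a b x else 0)"
    using assms sC unfolding regmat_def by (simp add: dih_elem_def gr_mult_basis)
  also have "\<dots> = dih_elt n a b x0"
  proof (rule sum_unique[OF finite_dih_carrier x0C])
    fix x assume "x \<in> dih_carrier n"
    then obtain e k where x: "x = (e,k)" "e < 2" "k < n" by (auto simp: dih_carrier_def)
    show "dih_mult n x (s div n, s mod n) = (t div n, t mod n) \<longleftrightarrow> x = x0"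
      unfolding x x0_def by (rule dih_mult_eq_iff) (use x td tm in auto)
  qed
  finally show ?thesis using td n assms by (auto simp: x0_def dih_elt_def less_2_cases_iff div_eq_0_iff)
  qed


lemma zpow_mod:
  assumes "z ^ n = (1::complex)"
  shows "z ^ (p mod n) = z ^ p"
proof -
  have "z ^ p = z ^ (n * (p div n) + p mod n)" by simp
  also have "\<dots> = (z ^ n) ^ (p div n) * z ^ (p mod n)" by (simp only: power_add power_mult)
  also have "\<dots> = z ^ (p mod n)" by (simp add: assms)
  finally show ?thesis by simp
qed

lemma R1:
  assumes zn: "z ^ n = (1::complex)" and zc: "cnj z * z = 1" and m: "m < n"
  shows "(\<Sum>s<n. complex_of_real (a ((m + n - s) mod n)) * z ^ s) = z ^ m * cnj (poly_at n a z)"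
proof -
  define \<phi> where "\<phi> s = (m + n - s) mod n" for s
  have \<phi>\<phi>: "\<phi> (\<phi> s) = s" if "s < n" for s
  proof -
    have n: "n > 0" using m by auto
    have "\<phi> s < n" using n unfolding \<phi>_def by auto
    then have "((\<phi> s + s) mod n = m)" using mod_eq_iff1[of "\<phi> s" n s m] that m by (simp add: \<phi>_def)
    then have "(s + \<phi> s) mod n = m" by (simp add: add.commute)
    then show ?thesis using mod_eq_iff1[of s n "\<phi> s" m] that m \<open>\<phi> s < n\<close> by (simp add: \<phi>_def)
  qed
  have \<phi>n: "\<phi> s < n" if "s < n" for s using that unfolding \<phi>_def by auto
  have zpow: "z ^ (\<phi> j) = z ^ m * cnj z ^ j" if "j < n" for j
  proof -
    have "z ^ (\<phi> j) = z ^ (m + n - j)" unfolding \<phi>_def by (rule zpow_mod[OF zn])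
    moreover have "z ^ (m + n - j) * z ^ j = z ^ m"
      using that zn by (simp add: power_add[symmetric] power_add)
    moreover have "(z ^ m * cnj z ^ j) * z ^ j = z ^ m"
      using zc by (simp add: mult.assoc power_mult_distrib[symmetric])
    moreover have "z ^ j \<noteq> 0" using zc by auto
    ultimately show ?thesis by (metis mult_right_cancel)
  qed
  have "(\<Sum>s<n. complex_of_real (a ((m + n - s) mod n)) * z ^ s) = (\<Sum>j<n. complex_of_real (a j) * z ^ (\<phi> j))"
  proof (rule sum.reindex_bij_witness[of _ \<phi> \<phi>])
    fix s assume "s \<in> {..<n}"
    then have s: "s < n" by simp
    show "\<phi> (\<phi> s) = s" "\<phi> s \<in> {..<n}" using s \<phi>\<phi> \<phi>n by auto
    show "complex_of_real (a (\<phi> s)) * z ^ \<phi> (\<phi> s) = complex_of_real (a ((m + n - s) mod n)) * z ^ s"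
      using \<phi>\<phi>[OF s] by (simp add: \<phi>_def)
  next
    fix s assume "s \<in> {..<n}"
    then show "\<phi> (\<phi> s) = s" "\<phi> s \<in> {..<n}" using \<phi>\<phi> \<phi>n by auto
  qed
  also have "\<dots> = (\<Sum>j<n. z ^ m * (complex_of_real (a j) * cnj z ^ j))"
    by (rule sum.cong) (auto simp: zpow)
  also have "\<dots> = z ^ m * cnj (poly_at n a z)"
    by (simp add: poly_at_def sum_distrib_left)
  finally show ?thesis .
qed

lemma R2:
  assumes zn: "z ^ n = (1::complex)" and m: "m < n"
  shows "(\<Sum>s<n. complex_of_real (a ((s + n - m) mod n)) * z ^ s) = z ^ m * poly_at n a z"
proof -
  define \<phi> where "\<phi> s = (s + n - m) mod n" for s
  define \<psi> where "\<psi> s = (s + m) mod n" for s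
  have n: "n > 0" using m by auto
  have 1: "\<psi> (\<phi> s) = s" if "s < n" for s
  proof -
    have "\<psi> (\<phi> s) = (s + n - m + m) mod n" unfolding \<phi>_def \<psi>_def by (simp add: mod_add_left_eq)
    also have "s + n - m + m = s + n" using m by simp
    finally show ?thesis using that by simp
  qed
  have 2: "\<phi> (\<psi> s) = s" if "s < n" for s
  proof (cases "s + m < n")
    case True
    then show ?thesis using that m unfolding \<phi>_def \<psi>_def by (simp add: le_mod_geq)
  next
    case False
    then have "(s + m) mod n = s + m - n" using that m by (simp add: le_mod_geq)
    then show ?thesis using that m False unfolding \<phi>_def \<psi>_def by (simp add: le_mod_geq)
  qed
  have zpow: "z ^ (\<psi> j) = z ^ m * z ^ j" for j
    unfolding \<psi>_def zpow_mod[OF zn] by (simp add: power_add)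
  have "(\<Sum>s<n. complex_of_real (a ((s + n - m) mod n)) * z ^ s) = (\<Sum>j<n. complex_of_real (a j) * z ^ (\<psi> j))"
    by (rule sum.reindex_bij_witness[of _ \<psi> \<phi>]) (auto simp: 1 2 n, simp_all add: \<phi>_def \<psi>_def n)
  also have "\<dots> = (\<Sum>j<n. z ^ m * (complex_of_real (a j) * z ^ j))"
    by (rule sum.cong) (auto simp: zpow)
  also have "\<dots> = z ^ m * poly_at n a z"
    by (simp add: poly_at_def sum_distrib_left)
  finally show ?thesis .
qed



definition uvec :: "nat \<Rightarrow> complex \<Rightarrow> complex \<Rightarrow> complex \<Rightarrow> complex vec" where
  "uvec n z c0 c1 = vec (2*n) (\<lambda>t. (if t < n then c0 else c1) * z ^ (t mod n))"

lemma sum_split2n: "(\<Sum>s\<in>{0..<2*(n::nat)}. f s) = (\<Sum>s<n. f s) + (\<Sum>s<n. f (n + s))"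
proof -
  have "(\<Sum>s\<in>{0..<2*n}. f s) = sum f {0..<n} + sum f {n..<n+n}"
    by (simp add: mult_2 sum.atLeastLessThan_concat)
  also have "sum f {n..<n+n} = (\<Sum>s<n. f (n + s))"
    using sum.shift_bounds_nat_ivl[of f 0 n n] by (simp add: add.commute lessThan_atLeast0)
  finally show ?thesis by (simp add: lessThan_atLeast0)
qed

lemma sum_cfactor: "(\<Sum>s<n. complex_of_real (f s) * (c * z ^ s)) = c * (\<Sum>s<n. complex_of_real (f s) * z ^ s)"
  by (simp add: sum_distrib_left mult.left_commute)

lemma A_uvec:
  assumes n: "n > 0" and zn: "z ^ n = 1" and zc: "cnj z * z = 1"
  shows "map_mat complex_of_real (regmat n (dih_elt n a b)) *\<^sub>v uvec n z c0 c1 =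
    uvec n z (c0 * cnj (poly_at n a z) + c1 * poly_at n b z) (c0 * cnj (poly_at n b z) + c1 * poly_at n a z)"
    (is "?A *\<^sub>v ?u = ?r")
proof (rule eq_vecI)
  show "dim_vec (?A *\<^sub>v ?u) = dim_vec ?r" by (simp add: uvec_def regmat_def)
  fix t assume "t < dim_vec ?r"
  then have t: "t < 2*n" by (simp add: uvec_def)
  let ?E = "\<lambda>s. regmat n (dih_elt n a b) $$ (t,s)"
  have "(?A *\<^sub>v ?u) $ t = (\<Sum>s\<in>{0..<2*n}. complex_of_real (?E s) * ?u $ s)"
    using t by (simp add: scalar_prod_def regmat_def uvec_def)
  also have "\<dots> = (\<Sum>s<n. complex_of_real (?E s) * (c0 * z ^ s)) + (\<Sum>s<n. complex_of_real (?E (n+s)) * (c1 * z ^ s))"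
    unfolding sum_split2n by (intro arg_cong2[where f="(+)"] sum.cong) (auto simp: uvec_def)
  also have "\<dots> = ?r $ t"
  proof (cases "t < n")
    case True
    have 1: "(\<Sum>s<n. complex_of_real (?E s) * (c0 * z ^ s)) = c0 * (z ^ t * cnj (poly_at n a z))"
      unfolding R1[OF zn zc True, symmetric] sum_cfactor[symmetric]
      by (rule sum.cong) (use t True in \<open>auto simp: regmat_entry\<close>)
    have 2: "(\<Sum>s<n. complex_of_real (?E (n+s)) * (c1 * z ^ s)) = c1 * (z ^ t * poly_at n b z)"
      unfolding R2[OF zn True, symmetric] sum_cfactor[symmetric]
      by (rule sum.cong) (use t True in \<open>auto simp: regmat_entry\<close>)
    show ?thesis unfolding 1 2 using True t by (simp add: uvec_def algebra_simps)
  next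
    case False
    define m where "m = t - n"
    have m: "m < n" "t mod n = m" using t False by (auto simp: m_def le_mod_geq)
    have 1: "(\<Sum>s<n. complex_of_real (?E s) * (c0 * z ^ s)) = c0 * (z ^ m * cnj (poly_at n b z))"
      unfolding R1[OF zn zc m(1), symmetric] sum_cfactor[symmetric]
      by (rule sum.cong) (use t False m in \<open>auto simp: regmat_entry\<close>)
    have 2: "(\<Sum>s<n. complex_of_real (?E (n+s)) * (c1 * z ^ s)) = c1 * (z ^ m * poly_at n a z)"
      unfolding R2[OF zn m(1), symmetric] sum_cfactor[symmetric]
      by (rule sum.cong) (use t False m in \<open>auto simp: regmat_entry\<close>)
    show ?thesis unfolding 1 2 using False t m by (simp add: uvec_def algebra_simps)
  qed
  finally show "(?A *\<^sub>v ?u) $ t = ?r $ t" .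
qed

lemma AT_uvec:
  assumes n: "n > 0" and zn: "z ^ n = 1" and zc: "cnj z * z = 1"
  shows "transpose_mat (map_mat complex_of_real (regmat n (dih_elt n a b))) *\<^sub>v uvec n z c0 c1 =
    uvec n z (c0 * poly_at n a z + c1 * poly_at n b z) (c0 * cnj (poly_at n b z) + c1 * cnj (poly_at n a z))"
    (is "?A *\<^sub>v ?u = ?r")
proof (rule eq_vecI)
  show "dim_vec (?A *\<^sub>v ?u) = dim_vec ?r" by (simp add: uvec_def regmat_def)
  fix t assume "t < dim_vec ?r"
  then have t: "t < 2*n" by (simp add: uvec_def)
  let ?E = "\<lambda>s. regmat n (dih_elt n a b) $$ (s,t)"
  have "(?A *\<^sub>v ?u) $ t = (\<Sum>s\<in>{0..<2*n}. complex_of_real (?E s) * ?u $ s)"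
    using t by (simp add: scalar_prod_def regmat_def uvec_def)
  also have "\<dots> = (\<Sum>s<n. complex_of_real (?E s) * (c0 * z ^ s)) + (\<Sum>s<n. complex_of_real (?E (n+s)) * (c1 * z ^ s))"
    unfolding sum_split2n by (intro arg_cong2[where f="(+)"] sum.cong) (auto simp: uvec_def)
  also have "\<dots> = ?r $ t"
  proof (cases "t < n")
    case True
    have 1: "(\<Sum>s<n. complex_of_real (?E s) * (c0 * z ^ s)) = c0 * (z ^ t * poly_at n a z)"
      unfolding R2[OF zn True, symmetric] sum_cfactor[symmetric]
      by (rule sum.cong) (use t True in \<open>auto simp: regmat_entry\<close>)
    have 2: "(\<Sum>s<n. complex_of_real (?E (n+s)) * (c1 * z ^ s)) = c1 * (z ^ t * poly_at n b z)"
      unfolding R2[OF zn True, symmetric] sum_cfactor[symmetric]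
      by (rule sum.cong) (use t True in \<open>auto simp: regmat_entry\<close>)
    show ?thesis unfolding 1 2 using True t by (simp add: uvec_def algebra_simps)
  next
    case False
    define m where "m = t - n"
    have m: "m < n" "t mod n = m" using t False by (auto simp: m_def le_mod_geq)
    have 1: "(\<Sum>s<n. complex_of_real (?E s) * (c0 * z ^ s)) = c0 * (z ^ m * cnj (poly_at n b z))"
      unfolding R1[OF zn zc m(1), symmetric] sum_cfactor[symmetric]
      by (rule sum.cong) (use t False m in \<open>auto simp: regmat_entry\<close>)
    have 2: "(\<Sum>s<n. complex_of_real (?E (n+s)) * (c1 * z ^ s)) = c1 * (z ^ m * cnj (poly_at n a z))"
      unfolding R1[OF zn zc m(1), symmetric] sum_cfactor[symmetric]
      by (rule sum.cong) (use t False m in \<open>auto simp: regmat_entry\<close>)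
    show ?thesis unfolding 1 2 using False t m by (simp add: uvec_def algebra_simps)
  qed
  finally show "(?A *\<^sub>v ?u) $ t = ?r $ t" .
qed



lemma eig_alg:
  fixes F G \<sigma> :: complex and e :: real
  assumes key: "F * cnj G = \<sigma> * of_real (cmod F * cmod G)" and s: "cnj \<sigma> * \<sigma> = 1" and e: "e * e = 1"
  shows "(F + of_real e * \<sigma> * G) * cnj F + (cnj G + of_real e * \<sigma> * cnj F) * G = of_real ((cmod F + e * cmod G)^2)"
    and "(F + of_real e * \<sigma> * G) * cnj G + (cnj G + of_real e * \<sigma> * cnj F) * F = of_real ((cmod F + e * cmod G)^2) * (of_real e * \<sigma>)"
proof -
  define r where "r = cmod F * cmod G"
  have fF: "F * cnj F = of_real ((cmod F)^2)" by (rule complex_norm_square[symmetric])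
  have gG: "G * cnj G = of_real ((cmod G)^2)" by (rule complex_norm_square[symmetric])
  have "cnj (F * cnj G) = cnj \<sigma> * of_real r" using key by (simp add: r_def)
  then have "cnj F * G = cnj \<sigma> * of_real r" by simp
  then have "\<sigma> * (cnj F * G) = (cnj \<sigma> * \<sigma>) * of_real r" by (simp add: ac_simps)
  then have k2: "\<sigma> * (cnj F * G) = of_real r" using s by simp
  have k1: "F * cnj G = \<sigma> * of_real r" using key by (simp add: r_def)
  have sq: "(cmod F + e * cmod G)^2 = (cmod F)^2 + (cmod G)^2 + 2 * e * r"
    using e by (simp add: power2_eq_square algebra_simps r_def)
  have "(F + of_real e * \<sigma> * G) * cnj F + (cnj G + of_real e * \<sigma> * cnj F) * G
      = F * cnj F + G * cnj G + 2 * of_real e * (\<sigma> * (cnj F * G))" by (simp add: algebra_simps)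
  also have "\<dots> = of_real ((cmod F + e * cmod G)^2)" unfolding fF gG k2 sq by simp
  finally show "(F + of_real e * \<sigma> * G) * cnj F + (cnj G + of_real e * \<sigma> * cnj F) * G = of_real ((cmod F + e * cmod G)^2)" .
  have "(F + of_real e * \<sigma> * G) * cnj G + (cnj G + of_real e * \<sigma> * cnj F) * F
      = 2 * (F * cnj G) + of_real e * \<sigma> * (G * cnj G + F * cnj F)" by (simp add: algebra_simps)
  also have "\<dots> = 2 * \<sigma> * of_real r + of_real e * \<sigma> * (of_real ((cmod F)^2) + of_real ((cmod G)^2))"
    unfolding fF gG k1 by simp
  also have "\<dots> = of_real ((cmod F + e * cmod G)^2) * (of_real e * \<sigma>)"
  proof -
    have "complex_of_real e * of_real e = 1" using e by (metis of_real_1 of_real_mult)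
    then show ?thesis unfolding sq by (simp add: algebra_simps)
  qed
  finally show "(F + of_real e * \<sigma> * G) * cnj G + (cnj G + of_real e * \<sigma> * cnj F) * F = of_real ((cmod F + e * cmod G)^2) * (of_real e * \<sigma>)" .
qed

lemma xi_props:
  assumes "n > 0"
  shows "(cis (2 * pi / real n) ^ i) ^ n = 1" "cnj (cis (2 * pi / real n) ^ i) * cis (2 * pi / real n) ^ i = 1"
proof -
  have "(cis (2 * pi / real n) ^ i) ^ n = (cis (2 * pi / real n) ^ n) ^ i" by (simp add: power_mult[symmetric] mult.commute)
  also have "cis (2 * pi / real n) ^ n = 1" using assms by (simp add: DeMoivre)
  finally show "(cis (2 * pi / real n) ^ i) ^ n = 1" by simp
  show "cnj (cis (2 * pi / real n) ^ i) * cis (2 * pi / real n) ^ i = 1"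
    by (simp add: DeMoivre cis_cnj cis_mult)
qed

lemma xi_pow_inj:
  assumes n: "n > 0" and p: "p < n" and q: "q < n" and eq: "cis (2 * pi / real n) ^ p = cis (2 * pi / real n) ^ q"
  shows "p = q"
proof (rule ccontr)
  assume "p \<noteq> q"
  then obtain u v where uv: "u < v" "v < n" "cis (2 * pi / real n) ^ u = cis (2 * pi / real n) ^ v"
    using p q eq by (metis linorder_neqE_nat)
  define k where "k = v - u"
  have k: "0 < k" "k < n" using uv by (auto simp: k_def)
  let ?x = "cis (2 * pi / real n)"
  have "?x ^ u * ?x ^ k = ?x ^ (u + k)" by (simp only: power_add)
  also have "u + k = v" using uv by (simp add: k_def)
  finally have "?x ^ u * ?x ^ k = ?x ^ u * 1" using uv by simp
  then have "?x ^ k = 1" by (simp add: cis_neq_zero)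
  then have "cos (real k * (2 * pi / real n)) = 1" by (simp only: cos_n_Re_cis_pow_n) simp
  then obtain z :: int where z: "real k * (2 * pi / real n) = real_of_int z * 2 * pi"
    using cos_one_2pi_int by blast
  then have "real k / real n = real_of_int z" using n by (simp add: field_simps)
  moreover have "0 < real k / real n" "real k / real n < 1" using k n by auto
  ultimately have "0 < z" "z < 1" by simp_all
  then show False by simp
qed



definition sgn2 :: "nat \<Rightarrow> nat \<Rightarrow> real" where "sgn2 n j = (if j < n then 1 else -1)"

definition wvec :: "nat \<Rightarrow> (nat \<Rightarrow> complex) \<Rightarrow> nat \<Rightarrow> complex vec" where
  "wvec n \<sigma> j = uvec n (cis (2 * pi / real n) ^ (j mod n)) 1 (of_real (sgn2 n j) * \<sigma> (j mod n))"

lemma uvec_smult: "c \<cdot>\<^sub>v uvec n z c0 c1 = uvec n z (c * c0) (c * c1)"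
  by (rule eq_vecI) (auto simp: uvec_def)

lemma uvec_carrier: "uvec n z c0 c1 \<in> carrier_vec (2*n)"
  by (simp add: uvec_def)

lemma orth:
  assumes n: "n > 0" and s1: "\<And>i. cnj (\<sigma> i) * \<sigma> i = 1" and j: "j < 2*n" and l: "l < 2*n"
  shows "(\<Sum>t\<in>{0..<2*n}. cnj (wvec n \<sigma> j $ t) * wvec n \<sigma> l $ t) = (if j = l then of_nat (2*n) else 0)"
proof -
  define x where "x = cis (2 * pi / real n)"
  define p where "p = j mod n"
  define q where "q = l mod n"
  define cj where "cj = complex_of_real (sgn2 n j) * \<sigma> p"
  define cl where "cl = complex_of_real (sgn2 n l) * \<sigma> q"
  define w where "w = cnj (x ^ p) * x ^ q"
  have "(\<Sum>t\<in>{0..<2*n}. cnj (wvec n \<sigma> j $ t) * wvec n \<sigma> l $ t)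
     = (\<Sum>s<n. cnj ((x ^ p) ^ s) * (x ^ q) ^ s) + (\<Sum>s<n. cnj (cj * (x ^ p) ^ s) * (cl * (x ^ q) ^ s))"
    unfolding sum_split2n
    by (intro arg_cong2[where f="(+)"] sum.cong) (auto simp: wvec_def uvec_def x_def p_def q_def cj_def cl_def)
  also have "\<dots> = (1 + cnj cj * cl) * (\<Sum>s<n. w ^ s)"
    by (simp add: w_def power_mult_distrib sum_distrib_left algebra_simps sum.distrib)
  also have "\<dots> = (if j = l then of_nat (2*n) else 0)"
  proof (cases "p = q")
    case True
    have "w = 1" unfolding w_def True x_def using xi_props(2)[OF n, of q] by simp
    then have S: "(\<Sum>s<n. w ^ s) = of_nat n" by simp
    have cc: "cnj cj * cl = complex_of_real (sgn2 n j * sgn2 n l)"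
      unfolding cj_def cl_def True using s1[of q] by (simp add: algebra_simps)
    show ?thesis
    proof (cases "j = l")
      case True
      then show ?thesis unfolding S cc by (simp add: sgn2_def)
    next
      case False
      have "(j < n) \<noteq> (l < n)"
      proof
        assume "(j < n) = (l < n)"
        then have "j = l" using \<open>p = q\<close> j l unfolding p_def q_def
          by (cases "j < n") (auto simp: le_mod_geq)
        then show False using False by simp
      qed
      then have "sgn2 n j * sgn2 n l = -1" by (auto simp: sgn2_def)
      then show ?thesis unfolding S cc using False by simp
    qed
  next
    case False
    then have jl: "j \<noteq> l" unfolding p_def q_def by auto
    have wn: "w ^ n = 1"
    proof -
      have "w ^ n = cnj ((x ^ p) ^ n) * (x ^ q) ^ n" by (simp add: w_def power_mult_distrib)
      then show ?thesis using xi_props(1)[OF n] by (simp add: x_def)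
    qed
    have "w \<noteq> 1"
    proof
      assume "w = 1"
      then have w1: "x ^ p * w = x ^ p" by simp
      have e2: "x ^ p * w = (cnj (x ^ p) * x ^ p) * x ^ q" unfolding w_def by (simp only: mult_ac)
      have c1: "cnj (x ^ p) * x ^ p = 1" using xi_props(2)[OF n, of p] by (simp add: x_def)
      have "x ^ q = (cnj (x ^ p) * x ^ p) * x ^ q" by (simp only: c1 mult_1)
      also have "\<dots> = x ^ p * w" by (rule e2[symmetric])
      also have "\<dots> = x ^ p" by (rule w1)
      finally have "x ^ q = x ^ p" .
      then have "q = p" using xi_pow_inj[OF n, of q p] n by (simp add: x_def p_def q_def)
      then show False using False by simp
    qed
    then have "(\<Sum>s<n. w ^ s) = 0" using wn by (simp add: geometric_sum)
    then show ?thesis using jl by simp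
  qed
  finally show ?thesis .
qed



interpretation of_real_poly_hom: map_poly_inj_idom_hom of_real ..

lemma prod_split2n: "(\<Prod>s\<in>{0..<2*(n::nat)}. f s) = (\<Prod>s<n. f s) * (\<Prod>s<n. f (n + s))"
proof -
  have "(\<Prod>s\<in>{0..<2*n}. f s) = prod f {0..<n} * prod f {n..<n+n}"
    by (simp add: mult_2 prod.atLeastLessThan_concat)
  also have "prod f {n..<n+n} = (\<Prod>s<n. f (n + s))"
    using prod.shift_bounds_nat_ivl[of f 0 n n] by (simp add: add.commute lessThan_atLeast0)
  finally show ?thesis by (simp add: lessThan_atLeast0)
qed

theorem lemma2:
  fixes n :: nat and a b :: "nat \<Rightarrow> real"
  assumes "n \<ge> 1"
  defines "\<xi> \<equiv> cis (2 * pi / real n)"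
  defines "h \<equiv> dih_elt n a b"
  shows "char_poly (regmat n h * transpose_mat (regmat n h)) =
           (\<Prod>i<n. [: - ((cmod (poly_at n a (\<xi> ^ i)) + cmod (poly_at n b (\<xi> ^ i)))\<^sup>2), 1 :]
                  * [: - ((cmod (poly_at n a (\<xi> ^ i)) - cmod (poly_at n b (\<xi> ^ i)))\<^sup>2), 1 :])
       \<and> mat_norm n h \<le> Max ((\<lambda>i. cmod (poly_at n a (\<xi> ^ i)) + cmod (poly_at n b (\<xi> ^ i))) ` {0..<n})"
proof -
  have n: "n > 0" using assms(1) by simp
  define F where "F i = poly_at n a (\<xi> ^ i)" for i
  define G where "G i = poly_at n b (\<xi> ^ i)" for i
  define \<sigma> where "\<sigma> i = (if F i = 0 \<or> G i = 0 then 1 else F i * cnj (G i) / of_real (cmod (F i) * cmod (G i)))" for i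
  have \<sigma>1: "cnj (\<sigma> i) * \<sigma> i = 1" for i
  proof (cases "F i = 0 \<or> G i = 0")
    case True
    then show ?thesis by (simp add: \<sigma>_def)
  next
    case False
    have "cnj (\<sigma> i) * \<sigma> i = \<sigma> i * cnj (\<sigma> i)" by (simp only: mult.commute)
    also have "\<dots> = of_real ((cmod (\<sigma> i))^2)" by (rule complex_norm_square[symmetric])
    also have "cmod (\<sigma> i) = 1" using False by (simp add: \<sigma>_def norm_mult norm_divide)
    finally show ?thesis by simp
  qed
  have \<sigma>key: "F i * cnj (G i) = \<sigma> i * of_real (cmod (F i) * cmod (G i))" for i
    using \<sigma>_def by auto
  define lam where "lam j = (cmod (F (j mod n)) + sgn2 n j * cmod (G (j mod n)))^2" for j
  define A where "A = regmat n h"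
  define Ac where "Ac = map_mat complex_of_real A"
  have Acar: "A \<in> carrier_mat (2*n) (2*n)" by (simp add: A_def regmat_def)
  have Accar: "Ac \<in> carrier_mat (2*n) (2*n)" using Acar by (simp add: Ac_def)
  define M where "M = Ac * transpose_mat Ac"
  have Mcar: "M \<in> carrier_mat (2*n) (2*n)" using Accar by (simp add: M_def)
  have Mc: "map_mat complex_of_real (A * transpose_mat A) = M"
    unfolding M_def Ac_def using Acar by (simp add: of_real_hom.mat_hom_mult map_mat_transpose)
  have eig: "M *\<^sub>v wvec n \<sigma> j = of_real (lam j) \<cdot>\<^sub>v wvec n \<sigma> j" if j: "j < 2*n" for j
  proof -
    define p where "p = j mod n"
    define e where "e = sgn2 n j"
    have zn: "(\<xi> ^ p) ^ n = 1" and zc: "cnj (\<xi> ^ p) * \<xi> ^ p = 1" using xi_props[OF n] by (auto simp: \<xi>_def)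
    have e: "e * e = 1" by (simp add: e_def sgn2_def)
    have w: "wvec n \<sigma> j = uvec n (\<xi> ^ p) 1 (of_real e * \<sigma> p)" by (simp add: wvec_def \<xi>_def p_def e_def)
    have "M *\<^sub>v wvec n \<sigma> j = Ac *\<^sub>v (transpose_mat Ac *\<^sub>v wvec n \<sigma> j)"
      unfolding M_def w using Accar by (simp add: uvec_carrier assoc_mult_mat_vec[of _ "2*n" "2*n"])
    also have "\<dots> = uvec n (\<xi> ^ p) ((F p + of_real e * \<sigma> p * G p) * cnj (F p) + (cnj (G p) + of_real e * \<sigma> p * cnj (F p)) * G p)
        ((F p + of_real e * \<sigma> p * G p) * cnj (G p) + (cnj (G p) + of_real e * \<sigma> p * cnj (F p)) * F p)"
      unfolding w Ac_def A_def h_def AT_uvec[OF n zn zc] A_uvec[OF n zn zc] by (simp add: F_def G_def algebra_simps)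
    also have "\<dots> = uvec n (\<xi> ^ p) (of_real ((cmod (F p) + e * cmod (G p))^2)) (of_real ((cmod (F p) + e * cmod (G p))^2) * (of_real e * \<sigma> p))"
      by (simp only: eig_alg[OF \<sigma>key[of p] \<sigma>1[of p] e])
    also have "\<dots> = uvec n (\<xi> ^ p) (of_real (lam j)) (of_real (lam j) * (of_real e * \<sigma> p))"
      by (simp only: lam_def p_def e_def)
    also have "\<dots> = of_real (lam j) \<cdot>\<^sub>v wvec n \<sigma> j" unfolding w uvec_smult by simp
    finally show ?thesis .
  qed
  define W where "W = mat (2*n) (2*n) (\<lambda>(t,j). wvec n \<sigma> j $ t)"
  define D where "D = mat (2*n) (2*n) (\<lambda>(i,j). if i = j then complex_of_real (lam j) else 0)"
  define Q where "Q = mat (2*n) (2*n) (\<lambda>(j,t). cnj (W $$ (t,j)) / of_nat (2*n))"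
  have Wcar: "W \<in> carrier_mat (2*n) (2*n)" and Dcar: "D \<in> carrier_mat (2*n) (2*n)"
    and Qcar: "Q \<in> carrier_mat (2*n) (2*n)" by (auto simp: W_def D_def Q_def)
  have dimw: "dim_vec (wvec n \<sigma> j) = 2*n" for j by (simp add: wvec_def uvec_def)
  have colW: "col W j = wvec n \<sigma> j" if "j < 2*n" for j
    using that by (auto simp: W_def dimw intro!: eq_vecI)
  have MW: "M * W = W * D"
  proof (rule eq_matI)
    fix t j assume "t < dim_row (W * D)" "j < dim_col (W * D)"
    then have t: "t < 2*n" and j: "j < 2*n" using Wcar Dcar by auto
    have "(M * W) $$ (t,j) = (M *\<^sub>v col W j) $ t" using Mcar Wcar t j by simp
    also have "\<dots> = of_real (lam j) * W $$ (t,j)"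
      unfolding colW[OF j] eig[OF j] using t j by (simp add: dimw W_def)
    also have "\<dots> = (W * D) $$ (t,j)"
    proof -
      have "(W * D) $$ (t,j) = (\<Sum>s\<in>{0..<2*n}. W $$ (t,s) * (if s = j then complex_of_real (lam j) else 0))"
        using t j Wcar Dcar by (simp add: scalar_prod_def D_def)
      also have "\<dots> = (\<Sum>s\<in>{0..<2*n}. if s = j then W $$ (t,j) * complex_of_real (lam j) else 0)"
        by (rule sum.cong) auto
      also have "\<dots> = W $$ (t,j) * complex_of_real (lam j)" using j by simp
      finally show ?thesis by simp
    qed
    finally show "(M * W) $$ (t,j) = (W * D) $$ (t,j)" .
  qed (use Mcar Wcar Dcar in auto)
  have QW: "Q * W = 1\<^sub>m (2*n)"
  proof (rule eq_matI)
    fix j l assume "j < dim_row (1\<^sub>m (2*n) :: complex mat)" "l < dim_col (1\<^sub>m (2*n) :: complex mat)"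
    then have j: "j < 2*n" and l: "l < 2*n" by auto
    have "(Q * W) $$ (j,l) = (\<Sum>t\<in>{0..<2*n}. cnj (wvec n \<sigma> j $ t) / of_nat (2*n) * wvec n \<sigma> l $ t)"
      using j l Wcar Qcar by (simp add: scalar_prod_def Q_def W_def)
    also have "\<dots> = (\<Sum>t\<in>{0..<2*n}. cnj (wvec n \<sigma> j $ t) * wvec n \<sigma> l $ t) / of_nat (2*n)"
      by (simp add: sum_divide_distrib)
    also have "\<dots> = 1\<^sub>m (2*n) $$ (j,l)" unfolding orth[OF n \<sigma>1 j l] using j l n by simp
    finally show "(Q * W) $$ (j,l) = 1\<^sub>m (2*n) $$ (j,l)" .
  qed (use Qcar Wcar in auto)
  have WQ: "W * Q = 1\<^sub>m (2*n)" by (rule mat_mult_left_right_inverse[OF Qcar Wcar QW])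
  have MWDQ: "M = W * D * Q"
  proof -
    have "M = M * (W * Q)" using Mcar by (simp add: WQ)
    also have "\<dots> = (M * W) * Q" using Mcar Wcar Qcar by (simp add: assoc_mult_mat)
    finally show ?thesis unfolding MW .
  qed
  have "similar_mat M D"
    by (rule similar_matI[of M D W Q "2*n"]) (use Mcar Dcar Wcar Qcar WQ QW MWDQ in auto)
  then have cpMD: "char_poly M = char_poly D" by (rule char_poly_similar)
  have Dut: "upper_triangular D" by (auto simp: upper_triangular_def D_def)
  have "char_poly D = prod_list (map (\<lambda>a. [:- a, 1:]) (diag_mat D))"
    by (rule char_poly_upper_triangular[OF Dcar Dut])
  also have "diag_mat D = map (\<lambda>i. complex_of_real (lam i)) [0..<2*n]"
    unfolding diag_mat_def D_def by auto
  also have "prod_list (map (\<lambda>a. [:- a, 1:]) (map (\<lambda>i. complex_of_real (lam i)) [0..<2*n]))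
     = (\<Prod>i\<in>{0..<2*n}. [:- complex_of_real (lam i), 1:])"
    using prod.distinct_set_conv_list[of "[0..<2*n]" "\<lambda>i. [:- complex_of_real (lam i), 1:]"]
    by (simp add: comp_def)
  also have "\<dots> = (\<Prod>i<n. [:- complex_of_real (lam i), 1:] * [:- complex_of_real (lam (n+i)), 1:])"
    unfolding prod_split2n prod.distrib ..
  also have "\<dots> = (\<Prod>i<n. [:- complex_of_real ((cmod (F i) + cmod (G i))\<^sup>2), 1:]
      * [:- complex_of_real ((cmod (F i) - cmod (G i))\<^sup>2), 1:])"
    by (rule prod.cong) (auto simp: lam_def sgn2_def)
  finally have cpD: "char_poly D = \<dots>" .
  define R where "R = (\<Prod>i<n. [: - ((cmod (F i) + cmod (G i))\<^sup>2), 1 :] * [: - ((cmod (F i) - cmod (G i))\<^sup>2), 1 :])"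
  have MRcar: "A * transpose_mat A \<in> carrier_mat (2*n) (2*n)" using Acar by simp
  have ch: "char_poly (map_mat complex_of_real (A * transpose_mat A)) = map_poly complex_of_real (char_poly (A * transpose_mat A))"
    by (rule of_real_hom.char_poly_hom[OF MRcar])
  have "map_poly complex_of_real (char_poly (A * transpose_mat A)) = char_poly M"
    using ch unfolding Mc by simp
  also have "\<dots> = map_poly complex_of_real R"
    unfolding cpMD cpD R_def by (simp add: of_real_poly_hom.hom_prod of_real_poly_hom.hom_mult)
  finally have cpR: "char_poly (A * transpose_mat A) = R" by simp
  define P where "P i = (cmod (F i) + cmod (G i))\<^sup>2" for i
  define Mi where "Mi i = (cmod (F i) - cmod (G i))\<^sup>2" for i
  have S: "{t. eigenvalue (A * transpose_mat A) t} = P ` {..<n} \<union> Mi ` {..<n}"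
  proof -
    have "eigenvalue (A * transpose_mat A) t \<longleftrightarrow> t \<in> P ` {..<n} \<union> Mi ` {..<n}" for t
    proof -
      have "eigenvalue (A * transpose_mat A) t \<longleftrightarrow> poly R t = 0"
        using eigenvalue_root_char_poly[OF MRcar] cpR by simp
      also have "\<dots> \<longleftrightarrow> (\<exists>i\<in>{..<n}. (t - P i) * (t - Mi i) = 0)"
      proof -
        have pl: "poly [:- c, 1:] t = t - c" for c :: real by simp
        show ?thesis unfolding R_def poly_prod poly_mult pl P_def[symmetric] Mi_def[symmetric]
          by (subst prod_zero_iff) auto
      qed
      also have "\<dots> \<longleftrightarrow> t \<in> P ` {..<n} \<union> Mi ` {..<n}" by auto
      finally show ?thesis .
    qed
    then show ?thesis by auto
  qed
  define Mx where "Mx = Max ((\<lambda>i. cmod (F i) + cmod (G i)) ` {0..<n})"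
  have Mxge: "cmod (F i) + cmod (G i) \<le> Mx" if "i < n" for i
    unfolding Mx_def using that by (intro Max_ge) auto
  have Mx0: "0 \<le> Mx" using Mxge[of 0] n by (smt (verit) norm_ge_zero)
  have bound: "t \<le> Mx\<^sup>2" if tS: "t \<in> P ` {..<n} \<union> Mi ` {..<n}" for t
  proof -
    obtain i where i: "i < n" "t = P i \<or> t = Mi i" using tS by auto
    have "t \<le> (cmod (F i) + cmod (G i))\<^sup>2"
      using i(2) norm_ge_zero[of "F i"] norm_ge_zero[of "G i"] unfolding P_def Mi_def
      by (auto simp: abs_le_square_iff[symmetric] abs_le_iff)
    also have "\<dots> \<le> Mx\<^sup>2" using Mxge[OF i(1)] by (intro power_mono) auto
    finally show ?thesis .
  qed
  have fin: "finite (P ` {..<n} \<union> Mi ` {..<n})" and ne: "P ` {..<n} \<union> Mi ` {..<n} \<noteq> {}" using n by auto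
  have "mat_norm n h = sqrt (Max (P ` {..<n} \<union> Mi ` {..<n}))"
    unfolding mat_norm_def S[unfolded A_def] ..
  also have "\<dots> \<le> sqrt (Mx\<^sup>2)" by (rule real_sqrt_le_mono[OF bound[OF Max_in[OF fin ne]]])
  also have "\<dots> = Mx" using Mx0 by simp
  finally have norm: "mat_norm n h \<le> Mx" .
  show ?thesis using cpR norm unfolding R_def A_def Mx_def F_def G_def by simp
qed


end
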